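(* Let $B$ be a Ferrers board with $n$ columns, and let $M$ be the maximum entry of its root vector $\xi(B)$. If the first occurrence of $M$ in $\xi(B)$ is in position $j$, then $B$ is connected by a sequence of edges in the rook equivalence graph $G(B)$ to a Ferrers board $B'$ whose root vector $\xi(B')$ agrees with $\xi(B)$ in the first $j$ positions and is weakly decreasing in the positions $i\ge j$.
   Context: A Ferrers board is given by a weakly increasing sequence of non-negative integers $B=(b_1,\ldots,b_n)$ of column heights; it is the set of unit cells in the first quadrant lying in column $i$ and rows $1,\ldots,b_i$. Prepending columns of height $0$ on the left does not change the board, and boards are compared using the same number of columns by such padding. A placement of $k$ rooks on $B$ is a set of $k$ cells of $B$ no two in the same row or column; $r_k(B)$ is the number of such placements. Two boards are rook equivalent if they have equal $r_k$ for all $k\ge 0$. The root vector of $B$ is $\xi(B)=\langle 0-b_1,1-b_2,\ldots,(n-1)-b_n\rangle$. The rook equivalence graph $G(B)$ has as vertices all Ferrers boards rook equivalent to $B$, and $\{B_1,B_2\}$ is an edge iff, written with the same number of columns, $B_1$ and $B_2$ differ in exactly two columns $i$ and $j$, where $B_1$ has $k$ more cells than $B_2$ in column $i$ and $k$ fewer cells than $B_2$ in column $j$, for some $k>0$. *)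

theory Defs
  imports Main
begin

text \<open>A Ferrers board is a list of column heights (b_1,...,b_n), weakly increasing.
  Column i (0-based list index) contains the cells in rows 1..b_i.\<close>

definition ferrers :: "nat list \<Rightarrow> bool" where
  "ferrers B \<longleftrightarrow> sorted B"

definition cells :: "nat list \<Rightarrow> (nat \<times> nat) set" where
  "cells B = {(i, r). i < length B \<and> 1 \<le> r \<and> r \<le> B ! i}"

definition rook_placements :: "nat list \<Rightarrow> nat \<Rightarrow> (nat \<times> nat) set set" where
  "rook_placements B k = {P. P \<subseteq> cells B \<and> card P = k \<and>
      (\<forall>c\<in>P. \<forall>d\<in>P. c \<noteq> d \<longrightarrow> fst c \<noteq> fst d \<and> snd c \<noteq> snd d)}"

definition rook_num :: "nat list \<Rightarrow> nat \<Rightarrow> nat" where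
  "rook_num B k = card (rook_placements B k)"

definition rook_equiv :: "nat list \<Rightarrow> nat list \<Rightarrow> bool" where
  "rook_equiv B C \<longleftrightarrow> (\<forall>k. rook_num B k = rook_num C k)"

text \<open>Root vector xi(B) = <0 - b_1, 1 - b_2, ..., (n-1) - b_n> (0-based index i gives i - b_{i+1}).\<close>
definition root_vector :: "nat list \<Rightarrow> int list" where
  "root_vector B = map (\<lambda>i. int i - int (B ! i)) [0..<length B]"

definition pad :: "nat \<Rightarrow> nat list \<Rightarrow> nat list" where
  "pad m B = replicate (m - length B) 0 @ B"

definition rook_edge :: "nat list \<Rightarrow> nat list \<Rightarrow> bool" where
  "rook_edge B1 B2 \<longleftrightarrow>
     (let m = max (length B1) (length B2); X = pad m B1; Y = pad m B2 in
      \<exists>i j k. i < m \<and> j < m \<and> i \<noteq> j \<and> k > 0 \<and>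
        X ! i = Y ! i + k \<and> Y ! j = X ! j + k \<and>
        (\<forall>l<m. l \<noteq> i \<longrightarrow> l \<noteq> j \<longrightarrow> X ! l = Y ! l))"

definition G_vertex :: "nat list \<Rightarrow> nat list \<Rightarrow> bool" where
  "G_vertex B C \<longleftrightarrow> ferrers C \<and> rook_equiv C B"

definition G_edge :: "nat list \<Rightarrow> nat list \<Rightarrow> nat list \<Rightarrow> bool" where
  "G_edge B C D \<longleftrightarrow> G_vertex B C \<and> G_vertex B D \<and> rook_edge C D"

end

theory Submission
  imports Defs "HOL-Library.Multiset"
begin

lemma cells_finite: "finite (cells B)"
proof -
  have "cells B \<subseteq> {..<length B} \<times> {..sum_list B}"
    unfolding cells_def using elem_le_sum_list by fastforce
  then show ?thesis by (rule finite_subset) auto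
qed

lemma placements_finite: "finite (rook_placements B k)"
proof -
  have "rook_placements B k \<subseteq> Pow (cells B)" unfolding rook_placements_def by auto
  then show ?thesis using cells_finite by (meson finite_Pow_iff finite_subset)
qed

lemma rook_num_0: "rook_num B 0 = 1"
proof -
  have "rook_placements B 0 = {{}}"
    unfolding rook_placements_def using cells_finite
    by auto (metis card_0_eq cells_finite finite_subset empty_iff)
  then show ?thesis unfolding rook_num_def by simp
qed

lemma placement_card_le:
  assumes "P \<in> rook_placements B k" shows "k \<le> length B"
proof -
  have P: "P \<subseteq> cells B" "card P = k"
    "\<forall>c\<in>P. \<forall>d\<in>P. c \<noteq> d \<longrightarrow> fst c \<noteq> fst d \<and> snd c \<noteq> snd d"
    using assms unfolding rook_placements_def by auto
  have "inj_on fst P" using P(3) by (meson inj_onI)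
  moreover have "fst ` P \<subseteq> {..<length B}" using P(1) unfolding cells_def by auto
  ultimately have "card P \<le> card {..<length B}"
    by (metis card_image card_mono finite_lessThan)
  then show ?thesis using P(2) by simp
qed

lemma rook_num_big: "k > length B \<Longrightarrow> rook_num B k = 0"
  unfolding rook_num_def using placement_card_le
  by (metis card.empty equals0I not_le)

lemma cells_snoc: "cells (B @ [a]) = cells B \<union> {length B} \<times> {1..a}"
  unfolding cells_def by (auto simp: nth_append less_Suc_eq)

lemma rows_of_placement:
  assumes "Q \<in> rook_placements B k" "\<forall>x\<in>set B. x \<le> a"
  shows "snd ` Q \<subseteq> {1..a}" "card (snd ` Q) = k"
proof -
  have P: "Q \<subseteq> cells B" "card Q = k"
    "\<forall>c\<in>Q. \<forall>d\<in>Q. c \<noteq> d \<longrightarrow> fst c \<noteq> fst d \<and> snd c \<noteq> snd d"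
    using assms unfolding rook_placements_def by auto
  show "snd ` Q \<subseteq> {1..a}" using P(1) assms(2) unfolding cells_def
    by (force dest: nth_mem)
  have "inj_on snd Q" using P(3) by (meson inj_onI)
  then show "card (snd ` Q) = k" using P(2) by (simp add: card_image)
qed

lemma rook_num_pos_le:
  assumes "rook_num B k > 0" "\<forall>x\<in>set B. x \<le> a"
  shows "k \<le> a"
proof -
  obtain Q where "Q \<in> rook_placements B k" using assms(1) unfolding rook_num_def
    by (metis card.empty equals0I less_irrefl)
  from rows_of_placement[OF this assms(2)] show ?thesis
    by (metis card_atLeastAtMost card_mono diff_Suc_1 finite_atLeastAtMost)
qed

lemma rook_num_snoc:
  assumes "\<forall>x\<in>set B. x \<le> a" "k \<ge> 1"
  shows "rook_num (B @ [a]) k = rook_num B k + (a - (k - 1)) * rook_num B (k - 1)"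
proof -
  let ?m = "length B"
  let ?A = "rook_placements (B @ [a]) k"
  define A1 where "A1 = {P \<in> ?A. \<forall>c\<in>P. fst c \<noteq> ?m}"
  define A2 where "A2 = {P \<in> ?A. \<exists>c\<in>P. fst c = ?m}"
  have split: "?A = A1 \<union> A2" "A1 \<inter> A2 = {}" unfolding A1_def A2_def by auto
  have fin: "finite A1" "finite A2" unfolding A1_def A2_def using placements_finite by auto
  have A1eq: "A1 = rook_placements B k"
  proof -
    have "P \<in> A1 \<longleftrightarrow> P \<in> rook_placements B k" for P
    proof -
      have "(P \<subseteq> cells (B@[a]) \<and> (\<forall>c\<in>P. fst c \<noteq> ?m)) \<longleftrightarrow> P \<subseteq> cells B"
      proof -
        have "\<forall>c\<in>cells B. fst c < ?m" unfolding cells_def by auto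
        then show ?thesis unfolding cells_snoc by fastforce
      qed
      then show ?thesis unfolding A1_def rook_placements_def by auto
    qed
    then show ?thesis by auto
  qed
  define S where "S = Sigma (rook_placements B (k-1)) (\<lambda>Q. {?m} \<times> ({1..a} - snd ` Q))"
  define f :: "(nat\<times>nat) set \<times> (nat\<times>nat) \<Rightarrow> (nat\<times>nat) set" where "f = (\<lambda>(Q, c). insert c Q)"
  have finS: "finite S" unfolding S_def using placements_finite by auto
  have cardS: "card S = rook_num B (k-1) * (a - (k-1))"
  proof -
    have "card S = (\<Sum>Q\<in>rook_placements B (k-1). card ({?m} \<times> ({1..a} - snd ` Q)))"
      unfolding S_def using placements_finite by (simp add: card_SigmaI)
    also have "\<dots> = (\<Sum>Q\<in>rook_placements B (k-1). a - (k-1))"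
    proof (rule sum.cong)
      fix Q assume Q: "Q \<in> rook_placements B (k-1)"
      show "card ({?m} \<times> ({1..a} - snd ` Q)) = a - (k-1)"
        using rows_of_placement[OF Q assms(1)]
        by (simp add: card_cartesian_product card_Diff_subset finite_subset)
    qed simp
    finally show ?thesis unfolding rook_num_def by simp
  qed
  have cells_B: "\<forall>c\<in>cells B. fst c < ?m" unfolding cells_def by auto
  have inj: "inj_on f S"
  proof (rule inj_onI)
    fix x y assume x: "x \<in> S" and y: "y \<in> S" and e: "f x = f y"
    obtain Q c where xq: "x = (Q, c)" by (cases x)
    obtain R d where yq: "y = (R, d)" by (cases y)
    have Qc: "Q \<subseteq> cells B" "fst c = ?m" using x xq unfolding S_def rook_placements_def by auto
    have Rd: "R \<subseteq> cells B" "fst d = ?m" using y yq unfolding S_def rook_placements_def by auto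
    have ins: "insert c Q = insert d R" using e xq yq f_def by simp
    have "c \<notin> Q" "d \<notin> R" using Qc Rd cells_B by fastforce+
    have "c = d"
    proof (rule ccontr)
      assume "c \<noteq> d"
      then have "c \<in> R" using ins by blast
      then show False using Qc Rd cells_B by fastforce
    qed
    moreover have "Q = R" using ins \<open>c = d\<close> \<open>c \<notin> Q\<close> \<open>d \<notin> R\<close>
      by (metis Diff_insert_absorb)
    ultimately show "x = y" using xq yq by simp
  qed
  have img: "f ` S = A2"
  proof
    show "f ` S \<subseteq> A2"
    proof
      fix P assume "P \<in> f ` S"
      then obtain Q c where qc: "(Q, c) \<in> S" "P = insert c Q" unfolding f_def by auto
      have Q: "Q \<subseteq> cells B" "card Q = k - 1"
        "\<forall>c\<in>Q. \<forall>d\<in>Q. c \<noteq> d \<longrightarrow> fst c \<noteq> fst d \<and> snd c \<noteq> snd d"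
        using qc(1) unfolding S_def rook_placements_def by auto
      have cS: "c \<in> {?m} \<times> ({1..a} - snd ` Q)" using qc(1) unfolding S_def by blast
      have c: "fst c = ?m" "snd c \<in> {1..a}" "snd c \<notin> snd ` Q" using cS by (auto simp: mem_Times_iff)
      have cQ: "c \<notin> Q" using c(1) cells_B Q(1) by (metis less_irrefl subsetD)
      have finQ: "finite Q" using Q(1) cells_finite finite_subset by blast
      have "P \<subseteq> cells (B @ [a])" using qc(2) Q(1) c unfolding cells_snoc
        by (cases c) auto
      moreover have "card P = k" using qc(2) cQ finQ Q(2) assms(2) by simp
      moreover have "\<forall>x\<in>P. \<forall>y\<in>P. x \<noteq> y \<longrightarrow> fst x \<noteq> fst y \<and> snd x \<noteq> snd y"
      proof (intro ballI impI)
        fix x y assume x: "x \<in> P" and y: "y \<in> P" and xy: "x \<noteq> y"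
        have fQ: "\<And>z. z \<in> Q \<Longrightarrow> fst z < ?m \<and> snd z \<noteq> snd c"
          using c(3) cells_B Q(1) by (metis image_eqI subsetD)
        show "fst x \<noteq> fst y \<and> snd x \<noteq> snd y"
        proof (cases "x = c")
          case True
          then have "y \<in> Q" using y xy qc(2) by auto
          then show ?thesis using fQ True c(1) by fastforce
        next
          case False
          then have xQ: "x \<in> Q" using x qc(2) by auto
          show ?thesis
          proof (cases "y = c")
            case True
            then show ?thesis using fQ[OF xQ] c(1) by fastforce
          next
            case False
            then have "y \<in> Q" using y qc(2) by auto
            then show ?thesis using Q(3) xQ xy by blast
          qed
        qed
      qed
      ultimately show "P \<in> A2" unfolding A2_def rook_placements_def using qc(2) c by auto
    qed
  next
    show "A2 \<subseteq> f ` S"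
    proof
      fix P assume P: "P \<in> A2"
      then obtain c where c: "c \<in> P" "fst c = ?m" unfolding A2_def by auto
      have Pp: "P \<subseteq> cells (B @ [a])" "card P = k"
        "\<forall>x\<in>P. \<forall>y\<in>P. x \<noteq> y \<longrightarrow> fst x \<noteq> fst y \<and> snd x \<noteq> snd y"
        using P unfolding A2_def rook_placements_def by auto
      define Q where "Q = P - {c}"
      have finP: "finite P" using Pp(1) cells_finite finite_subset by blast
      have Qcells: "Q \<subseteq> cells B"
      proof
        fix x assume x: "x \<in> Q"
        then have "x \<in> P" "x \<noteq> c" unfolding Q_def by auto
        then have "fst x \<noteq> ?m" using Pp(3) c by metis
        then show "x \<in> cells B" using \<open>x \<in> P\<close> Pp(1) unfolding cells_snoc by auto
      qed
      have "Q \<in> rook_placements B (k-1)"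
        unfolding rook_placements_def using Qcells Pp finP c(1) unfolding Q_def by auto
      moreover have "snd c \<in> {1..a}" using c Pp(1) cells_B unfolding cells_snoc by (metis (no_types) Un_iff mem_Times_iff subsetD less_irrefl)
      moreover have "snd c \<notin> snd ` Q" using Pp(3) c(1) unfolding Q_def by auto
      ultimately have "(Q, c) \<in> S" unfolding S_def using c(2) by (cases c) auto
      moreover have "P = f (Q, c)" unfolding f_def Q_def using c(1) by auto
      ultimately show "P \<in> f ` S" by blast
    qed
  qed
  have "card A2 = card S" using img inj card_image by fastforce
  then have "rook_num (B @ [a]) k = card A1 + card A2"
    unfolding rook_num_def using split fin card_Un_disjoint by metis
  then show ?thesis using A1eq cardS \<open>card A2 = card S\<close> unfolding rook_num_def by simp
qed


definition stepT :: "int \<Rightarrow> (int \<Rightarrow> int) \<Rightarrow> (int \<Rightarrow> int)" where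
  "stepT a T = (\<lambda>j. T (j - 1) + (j - a) * T j)"

definition Tf :: "int list \<Rightarrow> int \<Rightarrow> int" where
  "Tf xs = fold stepT xs (\<lambda>j. if j = 0 then 1 else 0)"

lemma stepT_comm: "stepT x \<circ> stepT y = stepT y \<circ> stepT x"
  by (rule ext, rule ext) (simp add: stepT_def algebra_simps)

lemma Tf_mset: "mset xs = mset ys \<Longrightarrow> Tf xs = Tf ys"
  unfolding Tf_def by (metis fold_multiset_equiv stepT_comm)

lemma root_vector_length[simp]: "length (root_vector B) = length B"
  by (simp add: root_vector_def)

lemma root_vector_nth: "i < length B \<Longrightarrow> root_vector B ! i = int i - int (B ! i)"
  by (simp add: root_vector_def)

lemma root_vector_snoc: "root_vector (B @ [a]) = root_vector B @ [int (length B) - int a]"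
  by (rule nth_equalityI) (auto simp: root_vector_def nth_append less_Suc_eq)

lemma rook_num_snoc_int:
  assumes "\<forall>x\<in>set B. x \<le> a" "k \<ge> 1"
  shows "int (rook_num (B @ [a]) k) = int (rook_num B k) + (int a - int (k - 1)) * int (rook_num B (k - 1))"
proof (cases "rook_num B (k - 1) = 0")
  case True
  then show ?thesis using rook_num_snoc[OF assms] by simp
next
  case False
  then have "k - 1 \<le> a" using rook_num_pos_le assms(1) by blast
  then show ?thesis using rook_num_snoc[OF assms] by (simp add: of_nat_diff)
qed

lemma Tf_rook:
  "sorted B \<Longrightarrow> Tf (root_vector B) j =
     (if 0 \<le> j \<and> j \<le> int (length B) then int (rook_num B (length B - nat j)) else 0)"
proof (induction B arbitrary: j rule: rev_induct)
  case Nil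
  then show ?case by (simp add: Tf_def root_vector_def rook_num_0)
next
  case (snoc a B)
  let ?m = "length B"
  let ?T = "Tf (root_vector B)"
  have sB: "sorted B" and le: "\<forall>x\<in>set B. x \<le> a" using snoc.prems by (auto simp: sorted_append)
  have IH: "\<And>j. ?T j = (if 0 \<le> j \<and> j \<le> int ?m then int (rook_num B (?m - nat j)) else 0)"
    using snoc.IH[OF sB] .
  have eq: "Tf (root_vector (B @ [a])) j = ?T (j - 1) + (j - (int ?m - int a)) * ?T j"
    by (simp add: Tf_def root_vector_snoc stepT_def)
  show ?case
  proof (cases "0 \<le> j \<and> j \<le> int ?m + 1")
    case False
    then show ?thesis using eq IH by auto
  next
    case True
    show ?thesis
    proof (cases "j = int ?m + 1")
      case True
      then show ?thesis using eq IH by (simp add: rook_num_0)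
    next
      case False
      define k where "k = Suc ?m - nat j"
      have k1: "k \<ge> 1" using False True unfolding k_def by auto
      have Tj: "?T j = int (rook_num B (k - 1))" using IH True False unfolding k_def
        by (auto simp: nat_diff_distrib)
      have Tj1: "?T (j - 1) = int (rook_num B k)"
      proof (cases "j = 0")
        case True
        then show ?thesis using IH k_def rook_num_big[of B k] by simp
      next
        case False
        then show ?thesis using IH True \<open>0 \<le> j \<and> j \<le> int ?m + 1\<close> \<open>j \<noteq> int ?m + 1\<close>
          unfolding k_def by (auto simp: nat_diff_distrib)
      qed
      have "int (k - 1) = int ?m - j" using k1 True False unfolding k_def by auto
      then have h: "j - (int ?m - int a) = int a - int (k - 1)" by simp
      have "Tf (root_vector (B @ [a])) j = int (rook_num (B @ [a]) k)"
        unfolding eq h Tj Tj1 rook_num_snoc_int[OF le k1] ..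
      then show ?thesis using True unfolding k_def by simp
    qed
  qed
qed

lemma rook_equiv_mset:
  assumes "sorted C" "sorted D" "length C = length D"
    "mset (root_vector C) = mset (root_vector D)"
  shows "rook_equiv C D"
  unfolding rook_equiv_def
proof
  fix k
  show "rook_num C k = rook_num D k"
  proof (cases "k \<le> length C")
    case True
    have "Tf (root_vector C) (int (length C - k)) = Tf (root_vector D) (int (length C - k))"
      using Tf_mset[OF assms(4)] by simp
    moreover have "length D - nat (int (length D) - int k) = k" using True assms(3) by arith
    ultimately show ?thesis using True assms(3) unfolding Tf_rook[OF assms(1)] Tf_rook[OF assms(2)]
      by simp
  next
    case False
    then show ?thesis using rook_num_big assms(3) by simp
  qed
qed


definition Eg :: "nat list \<Rightarrow> nat list \<Rightarrow> bool" where
  "Eg C D \<longleftrightarrow> sorted C \<and> sorted D \<and> length C = length D \<and>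
     mset (root_vector C) = mset (root_vector D) \<and> rook_edge C D"

definition good :: "nat \<Rightarrow> int \<Rightarrow> nat list \<Rightarrow> bool" where
  "good j L C \<longleftrightarrow> (\<forall>i. j \<le> i \<and> i < length C \<longrightarrow> L \<le> root_vector C ! i)"

definition maxinv :: "nat \<Rightarrow> nat list \<Rightarrow> bool" where
  "maxinv j C \<longleftrightarrow> (\<forall>i. j \<le> i \<and> i < length C \<longrightarrow> root_vector C ! i \<le> root_vector C ! j)"

definition EL :: "nat \<Rightarrow> int \<Rightarrow> nat list \<Rightarrow> nat list \<Rightarrow> bool" where
  "EL j L C D \<longleftrightarrow> Eg C D \<and> good j L C \<and> good j L D"

lemma pad_same[simp]: "pad (length B) B = B"
  by (simp add: pad_def)

lemma swap_step:
  assumes s: "sorted C" and len: "length C = Suc m" and jp: "j < p" and pm: "p < m"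
    and mx: "maxinv j C"
    and lt: "root_vector C ! p < root_vector C ! m"
    and before: "\<forall>i. j < i \<and> i < p \<longrightarrow> root_vector C ! m \<le> root_vector C ! i"
  defines "d \<equiv> nat (root_vector C ! m - root_vector C ! p)"
  defines "C' \<equiv> C[p := C ! p - d, m := C ! m + d]"
  shows "sorted C'" "length C' = Suc m"
    "root_vector C' = (root_vector C)[p := root_vector C ! m, m := root_vector C ! p]"
    "rook_edge C C'" "\<forall>i. i \<noteq> p \<and> i \<noteq> m \<longrightarrow> C' ! i = C ! i"
proof -
  have xi: "\<And>i. i < Suc m \<Longrightarrow> root_vector C ! i = int i - int (C ! i)"
    using root_vector_nth len by simp
  have jm: "j < Suc m" using jp pm by simp
  have xmj: "root_vector C ! m \<le> root_vector C ! j" using mx jp pm len unfolding maxinv_def by auto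
  have dpos: "d > 0" using lt unfolding d_def by simp
  have dint: "int d = root_vector C ! m - root_vector C ! p" using lt unfolding d_def by simp
  have Cp: "int (C ! p) = int p - root_vector C ! p" using xi pm by simp
  have Cm: "int (C ! m) = int m - root_vector C ! m" using xi pm by simp
  have Cj: "root_vector C ! j \<le> int j" using xi[OF jm] by simp
  have dle: "d \<le> C ! p" using dint Cp xmj Cj jp by linarith
  have C'p: "C' ! p = C ! p - d" unfolding C'_def using pm len by simp
  have C'm: "C' ! m = C ! m + d" unfolding C'_def using pm len by simp
  have C'o: "\<And>i. i \<noteq> p \<Longrightarrow> i \<noteq> m \<Longrightarrow> C' ! i = C ! i" unfolding C'_def by simp
  show lenC': "length C' = Suc m" unfolding C'_def using len by simp
  show "\<forall>i. i \<noteq> p \<and> i \<noteq> m \<longrightarrow> C' ! i = C ! i" using C'o by blast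
  have iC'p: "int (C' ! p) = int p - root_vector C ! m" using C'p dle dint Cp by simp
  have iC'm: "int (C' ! m) = int m - root_vector C ! p" using C'm dint Cm by simp
  show "root_vector C' = (root_vector C)[p := root_vector C ! m, m := root_vector C ! p]"
  proof (rule nth_equalityI)
    show "length (root_vector C') = length ((root_vector C)[p := root_vector C ! m, m := root_vector C ! p])"
      using lenC' len by simp
  next
    fix i assume "i < length (root_vector C')"
    then have i: "i < Suc m" using lenC' by simp
    show "root_vector C' ! i = (root_vector C)[p := root_vector C ! m, m := root_vector C ! p] ! i"
      using i pm len iC'p iC'm C'o xi root_vector_nth[of i C'] lenC'
      by (cases "i = m"; cases "i = p") auto
  qed
  show "rook_edge C C'"
    unfolding rook_edge_def Let_def using lenC' len
    apply (simp add: pad_def)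
    apply (rule exI[of _ p], rule conjI, use pm in simp)
    apply (rule exI[of _ m], rule conjI, simp)
    apply (rule conjI, use pm in simp)
    apply (rule exI[of _ d])
    using pm dpos C'p C'm C'o dle by auto
  have pm1: "int (C ! (p - 1)) \<le> int (p - 1) - root_vector C ! m"
  proof -
    have "root_vector C ! m \<le> root_vector C ! (p - 1)"
      using before xmj jp by (cases "p - 1 = j") auto
    then show ?thesis using xi[of "p - 1"] pm by simp
  qed
  show "sorted C'"
    unfolding sorted_iff_nth_mono_less
  proof (intro allI impI)
    fix i k assume ik: "i < k" and kl: "k < length C'"
    then have k: "k \<le> m" using lenC' by simp
    have mono: "\<And>a b. a \<le> b \<Longrightarrow> b \<le> m \<Longrightarrow> C ! a \<le> C ! b"
      using s len sorted_nth_mono by (metis le_imp_less_Suc)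
    show "C' ! i \<le> C' ! k"
    proof (cases "k = m")
      case True
      then show ?thesis
      proof (cases "i = p")
        case True
        then show ?thesis using iC'p iC'm lt pm \<open>k = m\<close> by simp
      next
        case False
        then have "C' ! i = C ! i" using C'o ik True by simp
        moreover have "C ! i \<le> C ! m" using mono ik True by simp
        ultimately show ?thesis using True C'm by simp
      qed
    next
      case km: False
      show ?thesis
      proof (cases "k = p")
        case True
        then have "i \<le> p - 1" "i \<noteq> m" using ik pm by auto
        then have "C' ! i = C ! i" "C ! i \<le> C ! (p - 1)" using C'o mono ik True pm by auto
        moreover have "int (p - 1) = int p - 1" using jp by simp
        ultimately have "int (C' ! i) \<le> int (C' ! p)" using iC'p pm1 by simp
        then have "int (C' ! i) \<le> int (C' ! k)" using True by simp
        then show ?thesis by simp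
      next
        case kp: False
        then have C'k: "C' ! k = C ! k" using C'o km by simp
        show ?thesis
        proof (cases "i = p")
          case True
          have "C ! p \<le> C ! k" using mono ik True k by simp
          then show ?thesis using C'k C'p True by simp
        next
          case False
          then show ?thesis using C'k C'o[of i] ik k mono by simp
        qed
      qed
    qed
  qed
qed


lemma phase1:
  assumes "sorted C" "length C = Suc m" "j \<le> m" "maxinv j C" "good j L C"
    "N = nat (root_vector C ! m - L)"
  shows "\<exists>C1. (EL j L)\<^sup>*\<^sup>* C C1 \<and> sorted C1 \<and> length C1 = Suc m \<and> maxinv j C1 \<and> good j L C1 \<and>
     (\<forall>i\<le>j. C1 ! i = C ! i) \<and> (\<forall>i. j \<le> i \<and> i \<le> m \<longrightarrow> root_vector C1 ! m \<le> root_vector C1 ! i)"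
  using assms
proof (induction N arbitrary: C rule: less_induct)
  case (less N C)
  note s = less.prems(1) and len = less.prems(2) and jm = less.prems(3)
    and mx = less.prems(4) and gd = less.prems(5) and N = less.prems(6)
  let ?x = "root_vector C"
  show ?case
  proof (cases "\<exists>p. j < p \<and> p < m \<and> ?x ! p < ?x ! m")
    case False
    have "\<forall>i. j \<le> i \<and> i \<le> m \<longrightarrow> ?x ! m \<le> ?x ! i"
    proof (intro allI impI)
      fix i assume i: "j \<le> i \<and> i \<le> m"
      show "?x ! m \<le> ?x ! i"
      proof (cases "i = j")
        case True then show ?thesis using mx len jm unfolding maxinv_def by auto
      next
        case f: False
        show ?thesis
        proof (cases "i = m")
          case False
          then have "j < i" "i < m" using f i by auto
          then show ?thesis using \<open>\<not> (\<exists>p. j < p \<and> p < m \<and> ?x ! p < ?x ! m)\<close> by (meson not_less)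
        qed simp
      qed
    qed
    then show ?thesis using s len mx gd by blast
  next
    case True
    define p where "p = (LEAST p. j < p \<and> p < m \<and> ?x ! p < ?x ! m)"
    have pP: "j < p \<and> p < m \<and> ?x ! p < ?x ! m"
      unfolding p_def using True by (metis (mono_tags, lifting) LeastI)
    have before: "\<forall>i. j < i \<and> i < p \<longrightarrow> ?x ! m \<le> ?x ! i"
    proof (intro allI impI)
      fix i assume "j < i \<and> i < p"
      then show "?x ! m \<le> ?x ! i" using not_less_Least[of i] pP unfolding p_def
        by (metis (mono_tags, lifting) not_le order.strict_trans)
    qed
    define d where "d = nat (root_vector C ! m - root_vector C ! p)"
    define C' where "C' = C[p := C ! p - d, m := C ! m + d]"
    note sw = swap_step[OF s len _ _ mx _ before, folded d_def, folded C'_def]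
    have sC': "sorted C'" and lenC': "length C' = Suc m"
      and rvC': "root_vector C' = ?x[p := ?x ! m, m := ?x ! p]"
      and edge: "rook_edge C C'" and oth: "\<forall>i. i \<noteq> p \<and> i \<noteq> m \<longrightarrow> C' ! i = C ! i"
      using sw pP by auto
    have pm: "p < m" "j < p" using pP by auto
    have rv_nth: "\<And>i. root_vector C' ! i = (if i = m then ?x ! p else if i = p then ?x ! m else ?x ! i)"
      unfolding rvC' using pm len by (auto simp: nth_list_update)
    have msetC': "mset (root_vector C') = mset ?x"
      unfolding rvC' using mset_swap[of m ?x p] pm len by simp
    have gd': "good j L C'"
      using gd pm len lenC' unfolding good_def rv_nth by auto
    have mx': "maxinv j C'"
      using mx pm len lenC' unfolding maxinv_def rv_nth by auto
    have E: "EL j L C C'"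
      unfolding EL_def Eg_def using s sC' len lenC' msetC' edge gd gd' by simp
    have Lp: "L \<le> ?x ! p" using gd pm len unfolding good_def by auto
    have less': "nat (root_vector C' ! m - L) < N"
      using N rv_nth pP Lp by auto
    obtain C1 where C1: "(EL j L)\<^sup>*\<^sup>* C' C1" "sorted C1" "length C1 = Suc m" "maxinv j C1"
      "good j L C1" "\<forall>i\<le>j. C1 ! i = C' ! i"
      "\<forall>i. j \<le> i \<and> i \<le> m \<longrightarrow> root_vector C1 ! m \<le> root_vector C1 ! i"
      using less.IH[OF less' sC' lenC' jm mx' gd' refl] by blast
    have "\<forall>i\<le>j. C1 ! i = C ! i" using C1(6) oth pm by auto
    moreover have "(EL j L)\<^sup>*\<^sup>* C C1" using E C1(1) by (rule converse_rtranclp_into_rtranclp)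
    ultimately show ?thesis using C1 by blast
  qed
qed


lemma rook_edge_snoc:
  assumes "rook_edge X Y" "length X = length Y"
  shows "rook_edge (X @ [a]) (Y @ [a])"
proof -
  from assms obtain i j k where ijk: "i < length X" "j < length X" "i \<noteq> j" "k > 0"
    "X ! i = Y ! i + k" "Y ! j = X ! j + k" "\<forall>l<length X. l \<noteq> i \<longrightarrow> l \<noteq> j \<longrightarrow> X ! l = Y ! l"
    unfolding rook_edge_def Let_def by (auto simp: pad_def)
  show ?thesis
    unfolding rook_edge_def Let_def
    apply (simp add: pad_def assms(2))
    apply (rule exI[of _ i], rule conjI, use ijk assms(2) in simp)
    apply (rule exI[of _ j], rule conjI, use ijk assms(2) in simp)
    apply (rule conjI, use ijk in simp)
    apply (rule exI[of _ k])
    using ijk assms(2) by (auto simp: nth_append less_Suc_eq)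
qed

lemma rv_snoc_nth: "i < length X \<Longrightarrow> root_vector (X @ [a]) ! i = root_vector X ! i"
  by (simp add: root_vector_snoc nth_append)

lemma rv_snoc_last: "root_vector (X @ [a]) ! length X = int (length X) - int a"
  by (simp add: root_vector_snoc nth_append)

lemma EL_lift:
  assumes "(EL j L') X Y" "length X = m" "j < m" "L \<le> L'" "int m - int a = L'"
  shows "(EL j L) (X @ [a]) (Y @ [a])"
proof -
  have E: "sorted X" "sorted Y" "length Y = m" "mset (root_vector X) = mset (root_vector Y)"
    "rook_edge X Y" "good j L' X" "good j L' Y"
    using assms(1,2) unfolding EL_def Eg_def by auto
  have sortlift: "sorted (Z @ [a])" if "sorted Z" "length Z = m" "good j L' Z" for Z
  proof -
    have "int (Z ! (m - 1)) \<le> int a"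
    proof -
      have "L' \<le> root_vector Z ! (m - 1)" using that assms(3) unfolding good_def by auto
      then show ?thesis using root_vector_nth[of "m - 1" Z] that(2) assms(3,5) by auto
    qed
    moreover have "\<forall>x\<in>set Z. x \<le> Z ! (m - 1)"
      using that(1,2) assms(3) by (auto simp: in_set_conv_nth intro!: sorted_nth_mono)
    ultimately show ?thesis using that(1) by (auto simp: sorted_append)
  qed
  have goodlift: "good j L (Z @ [a])" if "length Z = m" "good j L' Z" for Z
    unfolding good_def
  proof (intro allI impI)
    fix i assume i: "j \<le> i \<and> i < length (Z @ [a])"
    show "L \<le> root_vector (Z @ [a]) ! i"
    proof (cases "i < m")
      case True
      then show ?thesis using that i assms(4) rv_snoc_nth[of i Z a] unfolding good_def by force
    next
      case False
      then have "i = m" using i that by simp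
      then show ?thesis using rv_snoc_last[of Z a] that assms(4,5) by simp
    qed
  qed
  show ?thesis unfolding EL_def Eg_def
    using sortlift[of X] sortlift[of Y] goodlift[of X] goodlift[of Y] E assms(2)
      rook_edge_snoc[OF E(5)] by (simp add: root_vector_snoc)
qed

lemma EL_lift_rtrancl:
  assumes "(EL j L')\<^sup>*\<^sup>* X Y" "length X = m" "j < m" "L \<le> L'" "int m - int a = L'"
  shows "(EL j L)\<^sup>*\<^sup>* (X @ [a]) (Y @ [a]) \<and> length Y = m"
  using assms(1)
proof (induction rule: rtranclp_induct)
  case base
  then show ?case using assms(2) by simp
next
  case (step Y Z)
  then have "(EL j L) (Y @ [a]) (Z @ [a])" using EL_lift assms by blast
  moreover have "length Z = m" using step unfolding EL_def Eg_def by simp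
  ultimately show ?case using step by auto
qed

lemma EL_rtrancl_inv:
  assumes "(EL j L)\<^sup>*\<^sup>* X Y" "sorted X" "good j L X"
  shows "sorted Y \<and> good j L Y \<and> length Y = length X"
  using assms(1)
proof (induction rule: rtranclp_induct)
  case base then show ?case using assms by simp
next
  case (step Y Z) then show ?case unfolding EL_def Eg_def by simp
qed

lemma main:
  "sorted C \<Longrightarrow> length C = n \<Longrightarrow> j < n \<Longrightarrow> maxinv j C \<Longrightarrow> good j L C \<Longrightarrow>
   \<exists>C'. (EL j L)\<^sup>*\<^sup>* C C' \<and> sorted C' \<and> length C' = n \<and> (\<forall>i\<le>j. C' ! i = C ! i) \<and>
     (\<forall>i k. j \<le> i \<longrightarrow> i \<le> k \<longrightarrow> k < n \<longrightarrow> root_vector C' ! k \<le> root_vector C' ! i)"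
proof (induction n arbitrary: C L)
  case 0
  then show ?case by simp
next
  case (Suc m)
  note s = Suc.prems(1) and len = Suc.prems(2) and jn = Suc.prems(3)
    and mx = Suc.prems(4) and gd = Suc.prems(5)
  show ?case
  proof (cases "j = m")
    case True
    have "\<And>i k. j \<le> i \<Longrightarrow> i \<le> k \<Longrightarrow> k < Suc m \<Longrightarrow> i = k" using True by auto
    then show ?thesis using s len by (intro exI[of _ C]) auto
  next
    case False
    then have jm: "j < m" using jn by simp
    obtain C1 where C1: "(EL j L)\<^sup>*\<^sup>* C C1" "sorted C1" "length C1 = Suc m" "maxinv j C1"
      "good j L C1" "\<forall>i\<le>j. C1 ! i = C ! i"
      "\<forall>i. j \<le> i \<and> i \<le> m \<longrightarrow> root_vector C1 ! m \<le> root_vector C1 ! i"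
      using phase1[OF s len _ mx gd refl] jm by auto
    define P where "P = take m C1"
    define a where "a = C1 ! m"
    have C1eq: "C1 = P @ [a]" unfolding P_def a_def using C1(3)
      by (metis lessI take_Suc_conv_app_nth take_all order_refl)
    have lenP: "length P = m" unfolding P_def using C1(3) by simp
    define L' where "L' = root_vector C1 ! m"
    have L'eq: "int m - int a = L'" unfolding L'_def a_def using root_vector_nth[of m C1] C1(3) by simp
    have LL': "L \<le> L'" unfolding L'_def using C1(5,3) jm unfolding good_def by auto
    have rvP: "\<And>i. i < m \<Longrightarrow> root_vector P ! i = root_vector C1 ! i"
      using C1eq rv_snoc_nth lenP by metis
    have sP: "sorted P" using C1(2) C1eq by (simp add: sorted_append)
    have mxP: "maxinv j P" using C1(4) C1(3) lenP rvP jm unfolding maxinv_def by auto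
    have gdP: "good j L' P" using C1(7) lenP rvP unfolding good_def L'_def by auto
    obtain P' where P': "(EL j L')\<^sup>*\<^sup>* P P'" "sorted P'" "length P' = m" "\<forall>i\<le>j. P' ! i = P ! i"
      "\<forall>i k. j \<le> i \<longrightarrow> i \<le> k \<longrightarrow> k < m \<longrightarrow> root_vector P' ! k \<le> root_vector P' ! i"
      using Suc.IH[OF sP lenP jm mxP gdP] by blast
    have lift: "(EL j L)\<^sup>*\<^sup>* C1 (P' @ [a])"
      using EL_lift_rtrancl[OF P'(1) lenP jm LL' L'eq] C1eq by simp
    have gdP': "good j L' P'" using EL_rtrancl_inv[OF P'(1) sP gdP] by simp
    have path: "(EL j L)\<^sup>*\<^sup>* C (P' @ [a])" using C1(1) lift by simp
    have inv2: "sorted (P' @ [a])"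
      using EL_rtrancl_inv[OF lift C1(2) C1(5)] by simp
    have pre: "\<forall>i\<le>j. (P' @ [a]) ! i = C ! i"
      using P'(4) P'(3) C1(6) C1eq jm lenP by (auto simp: nth_append)
    have dec: "\<forall>i k. j \<le> i \<longrightarrow> i \<le> k \<longrightarrow> k < Suc m \<longrightarrow>
        root_vector (P' @ [a]) ! k \<le> root_vector (P' @ [a]) ! i"
    proof (intro allI impI)
      fix i k assume ik: "j \<le> i" "i \<le> k" "k < Suc m"
      show "root_vector (P' @ [a]) ! k \<le> root_vector (P' @ [a]) ! i"
      proof (cases "k < m")
        case True
        then show ?thesis using P'(5) ik P'(3) rv_snoc_nth[of _ P' a] by simp
      next
        case False
        then have k: "k = m" using ik by simp
        show ?thesis
        proof (cases "i = m")
          case True then show ?thesis using k by simp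
        next
          case False
          then have "i < m" using ik k by simp
          then show ?thesis using gdP' ik P'(3) k rv_snoc_nth[of i P' a] rv_snoc_last[of P' a] L'eq
            unfolding good_def by auto
        qed
      qed
    qed
    show ?thesis using path inv2 P'(3) pre dec len by (intro exI[of _ "P' @ [a]"]) auto
  qed
qed


lemma EL_to_G:
  assumes "(EL j L)\<^sup>*\<^sup>* B Y" "sorted B"
  shows "sorted Y \<and> length Y = length B \<and> mset (root_vector Y) = mset (root_vector B) \<and> (G_edge B)\<^sup>*\<^sup>* B Y"
  using assms(1)
proof (induction rule: rtranclp_induct)
  case base then show ?case using assms(2) by simp
next
  case (step Y Z)
  then have E: "sorted Z" "length Z = length B" "mset (root_vector Z) = mset (root_vector B)" "rook_edge Y Z"
    unfolding EL_def Eg_def by auto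
  have "G_vertex B Y" unfolding G_vertex_def ferrers_def
    using step assms(2) rook_equiv_mset[of Y B] by auto
  moreover have "G_vertex B Z" unfolding G_vertex_def ferrers_def
    using E assms(2) rook_equiv_mset[of Z B] by auto
  ultimately have "G_edge B Y Z" unfolding G_edge_def using E(4) by simp
  then show ?case using step E by auto
qed

theorem lemma8:
  fixes B :: "nat list" and n j :: nat
  assumes "ferrers B"
    and "length B = n"
    and "j < n"
    and "\<forall>i<n. root_vector B ! i \<le> root_vector B ! j"
    and "\<forall>i<j. root_vector B ! i < root_vector B ! j"
  shows "\<exists>B'. ferrers B' \<and> length B' = n \<and> G_vertex B B' \<and> (G_edge B)\<^sup>*\<^sup>* B B' \<and>
           (\<forall>i\<le>j. root_vector B' ! i = root_vector B ! i) \<and>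
           (\<forall>i k. j \<le> i \<longrightarrow> i \<le> k \<longrightarrow> k < n \<longrightarrow> root_vector B' ! k \<le> root_vector B' ! i)"
proof -
  have s: "sorted B" using assms(1) unfolding ferrers_def .
  have mx: "maxinv j B" using assms(2,4) unfolding maxinv_def by auto
  define L where "L = - int (sum_list B)"
  have gd: "good j L B" unfolding good_def L_def
  proof (intro allI impI)
    fix i assume "j \<le> i \<and> i < length B"
    then have "B ! i \<le> sum_list B" "i < length B" using elem_le_sum_list by auto
    then show "- int (sum_list B) \<le> root_vector B ! i" using root_vector_nth by simp
  qed
  obtain B' where B': "(EL j L)\<^sup>*\<^sup>* B B'" "sorted B'" "length B' = n" "\<forall>i\<le>j. B' ! i = B ! i"
    "\<forall>i k. j \<le> i \<longrightarrow> i \<le> k \<longrightarrow> k < n \<longrightarrow> root_vector B' ! k \<le> root_vector B' ! i"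
    using main[OF s assms(2,3) mx gd] by blast
  have G: "mset (root_vector B') = mset (root_vector B)" "(G_edge B)\<^sup>*\<^sup>* B B'"
    using EL_to_G[OF B'(1) s] by auto
  have "G_vertex B B'" unfolding G_vertex_def ferrers_def
    using B'(2,3) assms(2) s G(1) rook_equiv_mset[of B' B] by auto
  moreover have "\<forall>i\<le>j. root_vector B' ! i = root_vector B ! i"
    using B'(3,4) assms(2,3) root_vector_nth by auto
  ultimately show ?thesis using B' G unfolding ferrers_def by blast
qed

end
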